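(* Let $X_1,\dots,X_p$ be real topological vector spaces, $X=\prod_{\nu=1}^pX_\nu$, let $C$ be a convex subset of $X$, and let $\theta_\nu:X\to\mathbb{R}$, $\nu=1,\dots,p$, be continuous functions such that for every $\nu$ and every fixed $x^{-\nu}$ the function $x^\nu\mapsto\theta_\nu(x^\nu,x^{-\nu})$ is convex. Then the bifunction $f_0:X\times X\to\mathbb{R}$, $f_0(x,y):=\sum_{\nu=1}^p\big(\theta_\nu(y^\nu,y^{-\nu})-\theta_\nu(x^\nu,y^{-\nu})\big)$, has the star finite intersection property (fip$^*$) on $C$.
   Context: For $x\in X$, $x^\nu$ denotes the $\nu$-th component and $x^{-\nu}$ the vector of the other components. A bifunction $f$ has the fip$^*$ on a convex set $C$ if for every finite non-empty subset $A$ of $C$ there exists $x\in\operatorname{co}(A)$ such that $\max_{a\in A}f(a,x)\leq 0$. *)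

theory Defs
  imports "HOL-Analysis.Analysis"
begin

definition real_tvs :: "('a::{real_vector, topological_space}) itself \<Rightarrow> bool" where
  "real_tvs _ \<longleftrightarrow>
     continuous_on UNIV (\<lambda>z::'a \<times> 'a. fst z + snd z) \<and>
     continuous_on UNIV (\<lambda>z::real \<times> 'a. fst z *\<^sub>R snd z)"

text \<open>The factor spaces \<open>X_\<nu>\<close> are modelled as linear subspaces \<open>S \<nu>\<close> of a common real
topological vector space \<open>'a\<close> (with subspace topology); the index set is the finite
type \<open>'n\<close> (so \<open>p = CARD('n)\<close>). The product \<open>X\<close> is the following subset of \<open>'a ^ 'n\<close>,
carrying the product topology.\<close>
definition prod_space :: "('n::finite \<Rightarrow> 'a set) \<Rightarrow> ('a ^ 'n) set" where
  "prod_space S = {x. \<forall>\<nu>. x $ \<nu> \<in> S \<nu>}"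

text \<open>\<open>upd x \<nu> t\<close> is the point \<open>(t, x^{-\<nu>})\<close>.\<close>
definition upd :: "'a ^ 'n \<Rightarrow> 'n \<Rightarrow> 'a \<Rightarrow> 'a ^ 'n" where
  "upd x \<nu> t = (\<chi> j. if j = \<nu> then t else x $ j)"

definition f0 :: "('n::finite \<Rightarrow> 'a ^ 'n \<Rightarrow> real) \<Rightarrow> 'a ^ 'n \<Rightarrow> 'a ^ 'n \<Rightarrow> real" where
  "f0 \<theta> x y = (\<Sum>\<nu>\<in>UNIV. \<theta> \<nu> y - \<theta> \<nu> (upd y \<nu> (x $ \<nu>)))"

definition fip_star :: "('b::real_vector \<Rightarrow> 'b \<Rightarrow> real) \<Rightarrow> 'b set \<Rightarrow> bool" where
  "fip_star f C \<longleftrightarrow> (\<forall>A. finite A \<and> A \<noteq> {} \<and> A \<subseteq> C \<longrightarrow>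
      (\<exists>x \<in> convex hull A. Max ((\<lambda>a. f a x) ` A) \<le> 0))"

end

theory Submission
  imports Defs
begin


definition cube :: "nat \<Rightarrow> (nat \<Rightarrow> real) set" where
  "cube n = {x. \<forall>i. (i < n \<longrightarrow> 0 \<le> x i \<and> x i \<le> 1) \<and> (n \<le> i \<longrightarrow> x i = 0)}"

lemma kuhn_step:
  fixes F :: "(nat \<Rightarrow> real) \<Rightarrow> (nat \<Rightarrow> real)"
  assumes p: "0 < p" and maps: "\<forall>x\<in>cube n. F x \<in> cube n"
  shows "\<exists>z\<in>cube n. \<forall>i<n. \<exists>u\<in>cube n. \<exists>v\<in>cube n.
     (\<forall>j<n. \<bar>u j - z j\<bar> \<le> 1 / real p \<and> \<bar>v j - z j\<bar> \<le> 1 / real p) \<and> u i \<le> F u i \<and> F v i \<le> v i"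
proof -
  define emb :: "(nat \<Rightarrow> nat) \<Rightarrow> (nat \<Rightarrow> real)" where
    "emb x = (\<lambda>i. if i < n then real (x i) / real p else 0)" for x
  define label :: "(nat \<Rightarrow> nat) \<Rightarrow> nat \<Rightarrow> nat" where
    "label x i = (if x i = 0 then 0 else if x i = p then 1 else if emb x i \<le> F (emb x) i then 0 else 1)" for x i
  have embc: "emb x \<in> cube n" if "\<forall>j<n. x j \<le> p" for x
    using that p by (auto simp: cube_def emb_def)
  have embi: "emb x i = real (x i) / real p" if "i < n" for x i using that by (simp add: emb_def)
  have Fb: "0 \<le> F (emb x) i \<and> F (emb x) i \<le> 1" if "\<forall>j<n. x j \<le> p" "i < n" for x i
  proof -
    have "F (emb x) \<in> cube n" using maps embc[OF that(1)] by blast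
    then show ?thesis using that(2) unfolding cube_def by blast
  qed
  have lab0: "emb x i \<le> F (emb x) i" if "\<forall>j<n. x j \<le> p" "i < n" "label x i = 0" for x i
  proof (cases "x i = 0")
    case True
    then show ?thesis using Fb[OF that(1,2)] embi[OF that(2)] by simp
  next
    case False
    then show ?thesis using that(3) unfolding label_def by (auto split: if_splits)
  qed
  have lab1: "F (emb x) i \<le> emb x i" if "\<forall>j<n. x j \<le> p" "i < n" "label x i \<noteq> 0" for x i
  proof (cases "x i = p")
    case True
    then show ?thesis using Fb[OF that(1,2)] embi[OF that(2)] p by simp
  next
    case False
    then show ?thesis using that(3) unfolding label_def by (auto split: if_splits)
  qed
  obtain q where q1: "\<forall>i<n. q i < p"
    and q2: "\<forall>i<n. \<exists>r s. (\<forall>j<n. q j \<le> r j \<and> r j \<le> q j + 1) \<and> (\<forall>j<n. q j \<le> s j \<and> s j \<le> q j + 1) \<and> label r i \<noteq> label s i"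
  proof (rule kuhn_lemma[OF p, of n label])
    show "\<forall>x. (\<forall>i<n. x i \<le> p) \<longrightarrow> (\<forall>i<n. label x i = 0 \<or> label x i = 1)"
      by (simp add: label_def)
    show "\<forall>x. (\<forall>i<n. x i \<le> p) \<longrightarrow> (\<forall>i<n. x i = 0 \<longrightarrow> label x i = 0)"
      by (simp add: label_def)
    show "\<forall>x. (\<forall>i<n. x i \<le> p) \<longrightarrow> (\<forall>i<n. x i = p \<longrightarrow> label x i = 1)"
      using p by (simp add: label_def)
  qed blast
  have close: "\<bar>emb r j - emb q j\<bar> \<le> 1 / real p" if "\<forall>j<n. q j \<le> r j \<and> r j \<le> q j + 1" for r j
  proof (cases "j < n")
    case True
    then have "real (r j) - real (q j) \<le> 1" "real (q j) \<le> real (r j)" using that by auto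
    then have "\<bar>emb r j - emb q j\<bar> = (real (r j) - real (q j)) / real p"
      using True by (simp add: emb_def diff_divide_distrib[symmetric])
    also have "\<dots> \<le> 1 / real p" using p \<open>real (r j) - real (q j) \<le> 1\<close> by (intro divide_right_mono) auto
    finally show ?thesis .
  qed (simp add: emb_def)
  show ?thesis
  proof (rule bexI[of _ "emb q"], intro allI impI)
    show "emb q \<in> cube n" using q1 by (intro embc) (auto simp: less_imp_le)
    fix i assume i: "i < n"
    obtain r s where rs: "\<forall>j<n. q j \<le> r j \<and> r j \<le> q j + 1" "\<forall>j<n. q j \<le> s j \<and> s j \<le> q j + 1" "label r i \<noteq> label s i"
      using q2 i by blast
    have "r j \<le> p \<and> s j \<le> p" if "j < n" for j
    proof -
      have "r j \<le> q j + 1" "s j \<le> q j + 1" "q j < p" using rs(1,2) q1 that by auto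
      then show ?thesis by linarith
    qed
    then have rp: "\<forall>j<n. r j \<le> p" "\<forall>j<n. s j \<le> p" by auto
    have mem: "emb r \<in> cube n" "emb s \<in> cube n" using embc rp by auto
    have cl: "\<forall>j<n. \<bar>emb r j - emb q j\<bar> \<le> 1 / real p \<and> \<bar>emb s j - emb q j\<bar> \<le> 1 / real p"
      using close rs(1,2) by blast
    have "label s i = 0 \<or> label s i = 1" "label r i = 0 \<or> label r i = 1" by (simp_all add: label_def)
    then consider "label r i = 0" "label s i \<noteq> 0" | "label s i = 0" "label r i \<noteq> 0" using rs(3) by auto
    then show "\<exists>u\<in>cube n. \<exists>v\<in>cube n. (\<forall>j<n. \<bar>u j - emb q j\<bar> \<le> 1 / real p \<and> \<bar>v j - emb q j\<bar> \<le> 1 / real p) \<and> u i \<le> F u i \<and> F v i \<le> v i"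
    proof cases
      case 1
      then have "emb r i \<le> F (emb r) i" "F (emb s) i \<le> emb s i" using lab0[OF rp(1) i] lab1[OF rp(2) i] by auto
      then show ?thesis using mem cl by blast
    next
      case 2
      then have "emb s i \<le> F (emb s) i" "F (emb r) i \<le> emb r i" using lab0[OF rp(2) i] lab1[OF rp(1) i] by auto
      then show ?thesis using mem cl by blast
    qed
  qed
qed

lemma bw_gen:
  fixes Z :: "nat \<Rightarrow> nat \<Rightarrow> real"
  assumes "\<forall>k j. 0 \<le> Z k j \<and> Z k j \<le> 1"
  shows "\<exists>\<sigma>. strict_mono \<sigma> \<and> (\<forall>j<n. \<exists>l\<in>{0..1}. (\<lambda>k. Z (\<sigma> k) j) \<longlonglongrightarrow> l)"
proof (induction n)
  case 0
  then show ?case by (auto intro: strict_mono_id)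
next
  case (Suc n)
  then obtain \<sigma> where s: "strict_mono \<sigma>" "\<forall>j<n. \<exists>l\<in>{0..1}. (\<lambda>k. Z (\<sigma> k) j) \<longlonglongrightarrow> l" by blast
  have "seq_compact {0..1::real}" by (rule compact_imp_seq_compact[OF compact_Icc])
  then obtain l r where lr: "l \<in> {0..1}" "strict_mono r" "((\<lambda>k. Z (\<sigma> k) n) \<circ> r) \<longlonglongrightarrow> l"
    by (rule seq_compactE[of _ "\<lambda>k. Z (\<sigma> k) n"]) (use assms in auto)
  show ?case
  proof (intro exI conjI allI impI)
    show "strict_mono (\<sigma> \<circ> r)" using s(1) lr(2) by (rule strict_mono_o)
    fix j assume "j < Suc n"
    show "\<exists>l\<in>{0..1}. (\<lambda>k. Z ((\<sigma> \<circ> r) k) j) \<longlonglongrightarrow> l"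
    proof (cases "j < n")
      case True
      then obtain l' where l': "l' \<in> {0..1}" "(\<lambda>k. Z (\<sigma> k) j) \<longlonglongrightarrow> l'" using s by blast
      have "((\<lambda>k. Z (\<sigma> k) j) \<circ> r) \<longlonglongrightarrow> l'" by (rule LIMSEQ_subseq_LIMSEQ[OF l'(2) lr(2)])
      then show ?thesis using l'(1) by (intro bexI[of _ l']) (auto simp: o_def)
    next
      case False
      then have "j = n" using \<open>j < Suc n\<close> by auto
      then show ?thesis using lr by (auto simp: o_def)
    qed
  qed
qed

lemma fp_cube:
  fixes F :: "(nat \<Rightarrow> real) \<Rightarrow> (nat \<Rightarrow> real)"
  assumes maps: "\<forall>x\<in>cube n. F x \<in> cube n"
    and cont: "\<forall>z X. z \<in> cube n \<longrightarrow> (\<forall>k. X k \<in> cube n) \<longrightarrow> (\<forall>j<n. (\<lambda>k. X k j) \<longlonglongrightarrow> z j)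
                 \<longrightarrow> (\<forall>i<n. (\<lambda>k. F (X k) i) \<longlonglongrightarrow> F z i)"
  shows "\<exists>x\<in>cube n. F x = x"
proof -
  define P where "P k z u v i \<longleftrightarrow> u \<in> cube n \<and> v \<in> cube n \<and>
     (\<forall>j<n. \<bar>u j - z j\<bar> \<le> 1 / real (Suc k) \<and> \<bar>v j - z j\<bar> \<le> 1 / real (Suc k)) \<and> u i \<le> F u i \<and> F v i \<le> v i"
    for k and z u v :: "nat \<Rightarrow> real" and i
  have H: "\<forall>k. \<exists>z. z \<in> cube n \<and> (\<forall>i. \<exists>u v. i < n \<longrightarrow> P k z u v i)"
  proof
    fix k
    obtain z where "z \<in> cube n" "\<forall>i<n. \<exists>u\<in>cube n. \<exists>v\<in>cube n.
     (\<forall>j<n. \<bar>u j - z j\<bar> \<le> 1 / real (Suc k) \<and> \<bar>v j - z j\<bar> \<le> 1 / real (Suc k)) \<and> u i \<le> F u i \<and> F v i \<le> v i"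
      using kuhn_step[OF _ maps, of "Suc k"] by auto
    then show "\<exists>z. z \<in> cube n \<and> (\<forall>i. \<exists>u v. i < n \<longrightarrow> P k z u v i)"
      unfolding P_def by blast
  qed
  obtain Z where Z0: "\<forall>k. Z k \<in> cube n \<and> (\<forall>i. \<exists>u v. i < n \<longrightarrow> P k (Z k) u v i)"
    using choice[OF H] by blast
  have Z: "\<And>k. Z k \<in> cube n" "\<And>k i. \<exists>u v. i < n \<longrightarrow> P k (Z k) u v i" using Z0 by blast+
  have HW: "\<forall>k. \<exists>Wk. \<forall>i. i < n \<longrightarrow> P k (Z k) (fst (Wk i)) (snd (Wk i)) i"
  proof
    fix k
    have "\<forall>i. \<exists>w. i < n \<longrightarrow> P k (Z k) (fst w) (snd w) i"
    proof
      fix i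
      obtain u v where "i < n \<longrightarrow> P k (Z k) u v i" using Z(2) by blast
      then show "\<exists>w. i < n \<longrightarrow> P k (Z k) (fst w) (snd w) i" by (intro exI[of _ "(u, v)"]) simp
    qed
    then show "\<exists>Wk. \<forall>i. i < n \<longrightarrow> P k (Z k) (fst (Wk i)) (snd (Wk i)) i" by (rule choice)
  qed
  obtain W where W: "\<forall>k i. i < n \<longrightarrow> P k (Z k) (fst (W k i)) (snd (W k i)) i"
    using choice[OF HW] by blast
  define U where "U k i = fst (W k i)" for k i
  define V where "V k i = snd (W k i)" for k i
  have V: "\<And>k i. i < n \<longrightarrow> P k (Z k) (U k i) (V k i) i" using W by (simp add: U_def V_def)
  have ZUV: "\<And>k. Z k \<in> cube n"
    "\<And>k i. i < n \<Longrightarrow> U k i \<in> cube n \<and> V k i \<in> cube n \<and>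
     (\<forall>j<n. \<bar>U k i j - Z k j\<bar> \<le> 1 / real (Suc k) \<and> \<bar>V k i j - Z k j\<bar> \<le> 1 / real (Suc k)) \<and> U k i i \<le> F (U k i) i \<and> F (V k i) i \<le> V k i i"
     apply (rule Z(1))
    using V unfolding P_def by simp
  have "0 \<le> Z k j \<and> Z k j \<le> 1" for k j using ZUV(1)[of k] unfolding cube_def by (cases "j < n") auto
  then have "\<forall>k j. 0 \<le> Z k j \<and> Z k j \<le> 1" by blast
  then obtain \<sigma> where \<sigma>: "strict_mono \<sigma>" "\<forall>j<n. \<exists>l\<in>{0..1}. (\<lambda>k. Z (\<sigma> k) j) \<longlonglongrightarrow> l"
    using bw_gen by blast
  then obtain L where L: "\<And>j. j < n \<Longrightarrow> L j \<in> {0..1} \<and> (\<lambda>k. Z (\<sigma> k) j) \<longlonglongrightarrow> L j" by metis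
  define z where "z j = (if j < n then L j else 0)" for j
  have zc: "z \<in> cube n" using L by (auto simp: cube_def z_def)
  have Zz: "(\<lambda>k. Z (\<sigma> k) j) \<longlonglongrightarrow> z j" if "j < n" for j using L that by (simp add: z_def)
  have small: "(\<lambda>k. W k - Z (\<sigma> k) j) \<longlonglongrightarrow> 0" if "\<And>k. \<bar>W k - Z (\<sigma> k) j\<bar> \<le> 1 / real (Suc (\<sigma> k))" for W j
  proof (rule Lim_null_comparison[OF _ LIMSEQ_inverse_real_of_nat])
    show "\<forall>\<^sub>F k in sequentially. norm (W k - Z (\<sigma> k) j) \<le> inverse (real (Suc k))"
    proof (intro always_eventually allI)
      fix k
      have "1 / real (Suc (\<sigma> k)) \<le> 1 / real (Suc k)" using seq_suble[OF \<sigma>(1), of k]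
        by (intro divide_left_mono) auto
      then have "\<bar>W k - Z (\<sigma> k) j\<bar> \<le> 1 / real (Suc k)" using that[of k] by linarith
      then show "norm (W k - Z (\<sigma> k) j) \<le> inverse (real (Suc k))" by (simp add: inverse_eq_divide)
    qed
  qed
  have conv: "(\<lambda>k. W k j) \<longlonglongrightarrow> z j" if "j < n" "\<And>k. \<bar>W k j - Z (\<sigma> k) j\<bar> \<le> 1 / real (Suc (\<sigma> k))" for W j
  proof -
    have "(\<lambda>k. (W k j - Z (\<sigma> k) j) + Z (\<sigma> k) j) \<longlonglongrightarrow> 0 + z j"
      by (intro tendsto_add small Zz that)
    then show ?thesis by simp
  qed
  have "F z i = z i" if i: "i < n" for i
  proof -
    let ?U = "\<lambda>k. U (\<sigma> k) i" and ?V = "\<lambda>k. V (\<sigma> k) i"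
    have Uc: "\<And>k. ?U k \<in> cube n" "\<And>k. ?V k \<in> cube n" using ZUV(2)[OF i] by auto
    have Uz: "\<And>j. j < n \<Longrightarrow> (\<lambda>k. ?U k j) \<longlonglongrightarrow> z j" "\<And>j. j < n \<Longrightarrow> (\<lambda>k. ?V k j) \<longlonglongrightarrow> z j"
      using ZUV(2)[OF i] by (auto intro!: conv)
    have FU: "(\<lambda>k. F (?U k) i) \<longlonglongrightarrow> F z i" "(\<lambda>k. F (?V k) i) \<longlonglongrightarrow> F z i"
      using cont[rule_format, OF zc Uc(1) Uz(1) i] cont[rule_format, OF zc Uc(2) Uz(2) i] by auto
    have "z i \<le> F z i" by (rule LIMSEQ_le[OF Uz(1)[OF i] FU(1)]) (use ZUV(2)[OF i] in auto)
    moreover have "F z i \<le> z i" by (rule LIMSEQ_le[OF FU(2) Uz(2)[OF i]]) (use ZUV(2)[OF i] in auto)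
    ultimately show ?thesis by simp
  qed
  moreover have "F z i = z i" if "\<not> i < n" for i
    using maps zc that by (auto simp: cube_def)
  ultimately show ?thesis using zc by (intro bexI[of _ z]) (auto intro: ext)
qed



lemma tvs_add:
  fixes f g :: "'b \<Rightarrow> 'a::{real_vector, topological_space}"
  assumes tvs: "real_tvs TYPE('a)" and "(f \<longlongrightarrow> a) F" "(g \<longlongrightarrow> b) F"
  shows "((\<lambda>x. f x + g x) \<longlongrightarrow> a + b) F"
proof -
  have "continuous_on UNIV (\<lambda>z::'a \<times> 'a. fst z + snd z)"
    using tvs unfolding real_tvs_def by blast
  from continuous_on_tendsto_compose[OF this tendsto_Pair[OF assms(2,3)]] show ?thesis by simp
qed

lemma tvs_scale:
  fixes g :: "'b \<Rightarrow> 'a::{real_vector, topological_space}"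
  assumes tvs: "real_tvs TYPE('a)" and "(c \<longlongrightarrow> r) F" "(g \<longlongrightarrow> b) F"
  shows "((\<lambda>x. c x *\<^sub>R g x) \<longlongrightarrow> r *\<^sub>R b) F"
proof -
  have "continuous_on UNIV (\<lambda>z::real \<times> 'a. fst z *\<^sub>R snd z)"
    using tvs unfolding real_tvs_def by blast
  from continuous_on_tendsto_compose[OF this tendsto_Pair[OF assms(2,3)]] show ?thesis by simp
qed

lemma tvs_sum:
  fixes f :: "'i \<Rightarrow> 'b \<Rightarrow> 'a::{real_vector, topological_space}"
  assumes tvs: "real_tvs TYPE('a)" and "finite I" and "\<And>i. i \<in> I \<Longrightarrow> (f i \<longlongrightarrow> a i) F"
  shows "((\<lambda>x. \<Sum>i\<in>I. f i x) \<longlongrightarrow> (\<Sum>i\<in>I. a i)) F"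
  using assms(2,3)
proof (induction I rule: finite_induct)
  case empty
  then show ?case by simp
next
  case (insert i I)
  then show ?case by (simp add: tvs_add[OF tvs])
qed

lemma upd_nth: "upd x \<nu> t $ j = (if j = \<nu> then t else x $ j)"
  by (simp add: upd_def)

lemma upd_same: "upd x \<nu> (x $ \<nu>) = x"
  by (simp add: upd_def vec_eq_iff)

lemma upd_prod: "x \<in> prod_space S \<Longrightarrow> t \<in> S \<nu> \<Longrightarrow> upd x \<nu> t \<in> prod_space S"
  by (simp add: prod_space_def upd_nth)

lemma upd_tendsto:
  assumes "(X \<longlongrightarrow> x) F"
  shows "((\<lambda>k. upd (X k) \<nu> t) \<longlongrightarrow> upd x \<nu> t) F"
  by (rule vec_tendstoI) (simp add: upd_nth tendsto_vec_nth[OF assms])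



theorem proposition6p3:
  fixes S :: "'n::finite \<Rightarrow> 'a::{real_vector, topological_space} set"
    and C :: "('a ^ 'n) set"
    and \<theta> :: "'n \<Rightarrow> 'a ^ 'n \<Rightarrow> real"
  assumes tvs: "real_tvs TYPE('a)"
    and subspaces: "\<And>\<nu>. subspace (S \<nu>)"
    and C_sub: "C \<subseteq> prod_space S"
    and C_convex: "convex C"
    and cont: "\<And>\<nu>. continuous_on (prod_space S) (\<theta> \<nu>)"
    and conv: "\<And>\<nu> x. x \<in> prod_space S \<Longrightarrow> convex_on (S \<nu>) (\<lambda>t. \<theta> \<nu> (upd x \<nu> t))"
  shows "fip_star (f0 \<theta>) C"
  unfolding fip_star_def
proof (intro allI impI, elim conjE)
  fix A assume A: "finite A" "A \<noteq> {}" "A \<subseteq> C"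
  define m where "m = card A"
  have m: "0 < m" using A by (simp add: m_def card_gt_0_iff)
  obtain e where e: "bij_betw e {0..<m} A" using ex_bij_betw_nat_finite[OF A(1)] m_def by blast
  define J where "J = {..<Suc m}"
  have J: "finite J" "J \<noteq> {}" "m \<in> J" by (auto simp: J_def)
  define b where "b j = e (if j < m then j else 0)" for j
  have bA: "b j \<in> A" for j using e m unfolding b_def bij_betw_def by auto
  have bP: "b j \<in> prod_space S" for j using bA A C_sub by blast
  have Aeb: "\<exists>j<m. a = b j" if "a \<in> A" for a
  proof -
    have "a \<in> e ` {0..<m}" using e that by (simp add: bij_betw_def)
    then obtain i where "i < m" "a = e i" by auto
    then show ?thesis unfolding b_def by auto
  qed
  define sg where "sg t = max 1 (\<Sum>i<m. t i)" for t :: "nat \<Rightarrow> real"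
  define w where "w t j = (if j < m then t j / sg t else 1 - (\<Sum>i<m. t i) / sg t)" for t j
  define X where "X t = (\<Sum>j\<in>J. w t j *\<^sub>R b j)" for t
  define g where "g t j = max 0 (f0 \<theta> (b j) (X t))" for t j
  define G where "G t = (\<Sum>j\<in>J. g t j)" for t
  define F where "F t = (\<lambda>i. if i < m then (w t i + g t i) / (1 + G t) else 0)" for t

  have sg1: "1 \<le> sg t" for t by (simp add: sg_def)
  have wsum: "(\<Sum>j\<in>J. w t j) = 1" for t
  proof -
    have "(\<Sum>j\<in>J. w t j) = (\<Sum>j<m. t j / sg t) + (1 - (\<Sum>i<m. t i) / sg t)"
      unfolding J_def by (simp add: w_def)
    also have "\<dots> = 1" by (simp add: sum_divide_distrib)
    finally show ?thesis .
  qed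
  have wnn: "0 \<le> w t j" if "t \<in> cube m" for t j
  proof -
    have tnn: "0 \<le> t i" if "i < m" for i using \<open>t \<in> cube m\<close> that by (simp add: cube_def)
    have "(\<Sum>i<m. t i) \<le> sg t" by (simp add: sg_def)
    then have "(\<Sum>i<m. t i) / sg t \<le> 1" using sg1[of t] by simp
    then show ?thesis using tnn sg1[of t] by (auto simp: w_def)
  qed
  have XP: "X t \<in> prod_space S" for t
    unfolding prod_space_def X_def
  proof (safe)
    fix \<nu>
    show "(\<Sum>j\<in>J. w t j *\<^sub>R b j) $ \<nu> \<in> S \<nu>"
      unfolding sum_component vector_scaleR_component
      using bP subspaces[of \<nu>] by (intro subspace_sum subspace_scale) (auto simp: prod_space_def)
  qed
  have Xhull: "X t \<in> convex hull A" if "t \<in> cube m" for t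
    unfolding X_def
    by (rule convex_sum[OF J(1) convex_convex_hull wsum]) (use wnn[OF that] bA in \<open>auto intro: hull_inc\<close>)
  have gnn: "0 \<le> g t j" for t j by (simp add: g_def)
  have Gnn: "0 \<le> G t" for t unfolding G_def by (intro sum_nonneg gnn)
  have maps: "\<forall>x\<in>cube m. F x \<in> cube m"
  proof
    fix y assume y: "y \<in> cube m"
    have "F y i \<ge> 0 \<and> F y i \<le> 1" if i: "i < m" for i
    proof -
      have iJ: "i \<in> J" using i by (simp add: J_def)
      have "w y i \<le> (\<Sum>j\<in>J. w y j)" by (rule member_le_sum[OF iJ _ J(1)]) (use wnn[OF y] in auto)
      moreover have "g y i \<le> G y" unfolding G_def by (rule member_le_sum[OF iJ _ J(1)]) (use gnn in auto)
      ultimately have "w y i + g y i \<le> 1 + G y" using wsum[of y] by linarith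
      moreover have "0 \<le> w y i + g y i" using wnn[OF y, of i] gnn[of y i] by linarith
      moreover have "0 < 1 + G y" using Gnn[of y] by linarith
      ultimately show ?thesis using i by (simp add: F_def divide_le_eq_1)
    qed
    then show "F y \<in> cube m" by (auto simp: cube_def F_def)
  qed
  have contF: "\<forall>z T. z \<in> cube m \<longrightarrow> (\<forall>k. T k \<in> cube m) \<longrightarrow> (\<forall>j<m. (\<lambda>k. T k j) \<longlonglongrightarrow> z j)
                 \<longrightarrow> (\<forall>i<m. (\<lambda>k. F (T k) i) \<longlonglongrightarrow> F z i)"
  proof (intro allI impI)
    fix z T i assume z: "z \<in> cube m" and Tc: "\<forall>k. T k \<in> cube m"
      and Tz: "\<forall>j<m. (\<lambda>k. T k j) \<longlonglongrightarrow> z j" and i: "i < m"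
    have sumT: "(\<lambda>k. \<Sum>i<m. T k i) \<longlonglongrightarrow> (\<Sum>i<m. z i)"
      by (intro tendsto_sum) (use Tz in auto)
    have sgT: "(\<lambda>k. sg (T k)) \<longlonglongrightarrow> sg z" unfolding sg_def
      by (intro tendsto_max tendsto_const sumT)
    have sgz: "sg z \<noteq> 0" using sg1[of z] by linarith
    have wT: "(\<lambda>k. w (T k) j) \<longlonglongrightarrow> w z j" for j
    proof (cases "j < m")
      case True
      then show ?thesis unfolding w_def using Tz by (simp add: tendsto_divide[OF _ sgT sgz])
    next
      case False
      then show ?thesis unfolding w_def by (simp add: tendsto_diff[OF tendsto_const tendsto_divide[OF sumT sgT sgz]])
    qed
    have XT: "(\<lambda>k. X (T k)) \<longlonglongrightarrow> X z"
      unfolding X_def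
    proof (rule vec_tendstoI)
      fix \<nu>
      show "((\<lambda>k. (\<Sum>j\<in>J. w (T k) j *\<^sub>R b j) $ \<nu>) \<longlongrightarrow> (\<Sum>j\<in>J. w z j *\<^sub>R b j) $ \<nu>) sequentially"
        unfolding sum_component vector_scaleR_component
        by (rule tvs_sum[OF tvs J(1)], rule tvs_scale[OF tvs wT tendsto_const])
    qed
    have thT: "(\<lambda>k. \<theta> \<nu> (X (T k))) \<longlonglongrightarrow> \<theta> \<nu> (X z)" for \<nu>
      by (rule continuous_on_tendsto_compose[OF cont XT XP]) (simp add: XP)
    have thU: "(\<lambda>k. \<theta> \<nu> (upd (X (T k)) \<nu> c)) \<longlonglongrightarrow> \<theta> \<nu> (upd (X z) \<nu> c)" if "c \<in> S \<nu>" for \<nu> c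
      by (rule continuous_on_tendsto_compose[OF cont upd_tendsto[OF XT] upd_prod[OF XP that]])
        (simp add: upd_prod[OF XP that])
    have fT: "(\<lambda>k. f0 \<theta> (b j) (X (T k))) \<longlonglongrightarrow> f0 \<theta> (b j) (X z)" for j
      unfolding f0_def
    proof (intro tendsto_sum tendsto_diff thT thU)
      fix \<nu> show "b j $ \<nu> \<in> S \<nu>" using bP[of j] by (simp add: prod_space_def)
    qed
    have gT: "(\<lambda>k. g (T k) j) \<longlonglongrightarrow> g z j" for j
      unfolding g_def by (intro tendsto_max tendsto_const fT)
    have GT: "(\<lambda>k. G (T k)) \<longlonglongrightarrow> G z"
      unfolding G_def by (intro tendsto_sum gT)
    have "1 + G z \<noteq> 0" using Gnn[of z] by linarith
    then show "(\<lambda>k. F (T k) i) \<longlonglongrightarrow> F z i"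
      using i unfolding F_def by (simp add: tendsto_divide tendsto_add wT gT GT)
  qed
  obtain t where t: "t \<in> cube m" "F t = t" using fp_cube[OF maps contF] by blast
  define \<mu> where "\<mu> = w t"
  define x where "x = X t"
  have mnn: "0 \<le> \<mu> j" for j unfolding \<mu>_def by (rule wnn[OF t(1)])
  have msum: "(\<Sum>j\<in>J. \<mu> j) = 1" unfolding \<mu>_def by (rule wsum)
  have xP: "x \<in> prod_space S" unfolding x_def by (rule XP)
  have concave: "(\<Sum>j\<in>J. \<mu> j * f0 \<theta> (b j) x) \<le> 0"
  proof -
    have jen: "\<theta> \<nu> x \<le> (\<Sum>j\<in>J. \<mu> j * \<theta> \<nu> (upd x \<nu> (b j $ \<nu>)))" for \<nu>
    proof -
      have xs: "(\<Sum>j\<in>J. \<mu> j *\<^sub>R (b j $ \<nu>)) = x $ \<nu>"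
        unfolding x_def X_def \<mu>_def by (simp add: sum_component)
      have "\<theta> \<nu> (upd x \<nu> (\<Sum>j\<in>J. \<mu> j *\<^sub>R (b j $ \<nu>))) \<le> (\<Sum>j\<in>J. \<mu> j * \<theta> \<nu> (upd x \<nu> (b j $ \<nu>)))"
        by (rule convex_on_sum[OF J(1) J(2) conv[OF xP] msum, of "\<lambda>j. b j $ \<nu>"])
          (use mnn bP in \<open>auto simp: prod_space_def\<close>)
      then show ?thesis unfolding xs upd_same .
    qed
    have "(\<Sum>j\<in>J. \<mu> j * f0 \<theta> (b j) x)
        = (\<Sum>\<nu>\<in>UNIV. \<Sum>j\<in>J. \<mu> j * (\<theta> \<nu> x - \<theta> \<nu> (upd x \<nu> (b j $ \<nu>))))"
      unfolding f0_def by (simp add: sum_distrib_left sum.swap[of _ J])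
    also have "\<dots> = (\<Sum>\<nu>\<in>UNIV. \<theta> \<nu> x - (\<Sum>j\<in>J. \<mu> j * \<theta> \<nu> (upd x \<nu> (b j $ \<nu>))))"
      by (simp add: right_diff_distrib sum_subtractf sum_distrib_right[symmetric] msum)
    also have "\<dots> \<le> (\<Sum>\<nu>\<in>(UNIV::'n set). 0)"
      by (intro sum_mono) (use jen in auto)
    finally show ?thesis by simp
  qed
  have tsum: "(\<Sum>i<m. t i) \<le> 1"
  proof -
    have "(\<Sum>i<m. t i) = (\<Sum>i<m. F t i)" using t(2) by simp
    also have "\<dots> = (\<Sum>i<m. (w t i + g t i)) / (1 + G t)"
      by (simp add: F_def sum_divide_distrib)
    also have "\<dots> \<le> 1"
    proof -
      have "(\<Sum>i<m. (w t i + g t i)) \<le> (\<Sum>i\<in>J. (w t i + g t i))"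
        by (rule sum_mono2[OF J(1)]) (auto simp: J_def intro: add_nonneg_nonneg wnn[OF t(1)] gnn)
      also have "\<dots> = 1 + G t" by (simp add: sum.distrib wsum G_def)
      finally show ?thesis using Gnn[of t] by simp
    qed
    finally show ?thesis .
  qed
  have sgt: "sg t = 1" using tsum by (simp add: sg_def)
  have mut: "\<mu> j = t j" if "j < m" for j using that sgt by (simp add: \<mu>_def w_def)
  have mum: "\<mu> m = 1 - (\<Sum>i<m. \<mu> i)" using sgt mut by (simp add: \<mu>_def w_def)
  have gmu1: "g t j = \<mu> j * G t" if "j < m" for j
  proof -
    have "t j = (t j + g t j) / (1 + G t)" using t(2) that mut[OF that]
      by (metis F_def \<mu>_def)
    moreover have "1 + G t \<noteq> 0" using Gnn[of t] by linarith
    ultimately have "t j * (1 + G t) = t j + g t j" by (simp add: field_simps)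
    then show ?thesis using mut[OF that] by (simp add: algebra_simps)
  qed
  have gmu: "g t j = \<mu> j * G t" if "j \<in> J" for j
  proof (cases "j < m")
    case True then show ?thesis by (rule gmu1)
  next
    case False
    then have jm: "j = m" using that by (simp add: J_def)
    have "G t = (\<Sum>i<m. g t i) + g t m" unfolding G_def J_def by simp
    also have "(\<Sum>i<m. g t i) = (\<Sum>i<m. \<mu> i) * G t" by (simp add: gmu1 sum_distrib_right)
    finally have h: "G t = (\<Sum>i<m. \<mu> i) * G t + g t m" .
    have "g t m = G t - (\<Sum>i<m. \<mu> i) * G t" using h by linarith
    also have "\<dots> = (1 - (\<Sum>i<m. \<mu> i)) * G t" by (simp add: left_diff_distrib)
    finally show ?thesis using mum jm by simp
  qed
  have "G t = 0"
  proof (rule ccontr)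
    assume "G t \<noteq> 0"
    then have Gp: "G t > 0" using Gnn[of t] by linarith
    have eq: "\<mu> j * f0 \<theta> (b j) x = \<mu> j * (\<mu> j * G t)" if "j \<in> J" for j
    proof (cases "\<mu> j = 0")
      case False
      then have "\<mu> j > 0" using mnn[of j] by linarith
      then have "g t j > 0" using gmu[OF that] Gp by simp
      then have "g t j = f0 \<theta> (b j) x" unfolding g_def x_def by (simp add: max_def split: if_splits)
      then show ?thesis using gmu[OF that] by simp
    qed simp
    obtain j where j: "j \<in> J" "\<mu> j > 0"
    proof (rule ccontr)
      assume "\<not> thesis"
      have "\<forall>j\<in>J. \<mu> j = 0"
      proof
        fix j assume jJ: "j \<in> J"
        show "\<mu> j = 0"
        proof (rule ccontr)
          assume "\<mu> j \<noteq> 0"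
          then have "\<mu> j > 0" using mnn[of j] by linarith
          then show False using that jJ \<open>\<not> thesis\<close> by blast
        qed
      qed
      then show False using msum by simp
    qed
    have "\<mu> j * \<mu> j \<le> (\<Sum>i\<in>J. \<mu> i * \<mu> i)"
      by (rule member_le_sum[OF j(1) _ J(1)]) simp
    moreover have "0 < \<mu> j * \<mu> j" using j(2) by simp
    ultimately have "0 < G t * (\<Sum>i\<in>J. \<mu> i * \<mu> i)" using Gp by simp
    also have "\<dots> = (\<Sum>j\<in>J. \<mu> j * f0 \<theta> (b j) x)"
      by (simp add: eq sum_distrib_left algebra_simps)
    finally show False using concave by simp
  qed
  then have "\<forall>j\<in>J. g t j = 0" unfolding G_def using sum_nonneg_eq_0_iff[of J "g t"] J(1) gnn by blast
  then have fle: "f0 \<theta> (b j) x \<le> 0" if "j \<in> J" for j using that unfolding g_def x_def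
    by (metis max.absorb_iff2 max.commute nle_le)
  show "\<exists>x\<in>convex hull A. Max ((\<lambda>a. f0 \<theta> a x) ` A) \<le> 0"
  proof (intro bexI[of _ x])
    show "x \<in> convex hull A" unfolding x_def by (rule Xhull[OF t(1)])
    show "Max ((\<lambda>a. f0 \<theta> a x) ` A) \<le> 0"
    proof -
      have "f0 \<theta> a x \<le> 0" if aA: "a \<in> A" for a
      proof -
        obtain j where "j < m" "a = b j" using Aeb[OF aA] by blast
        then show ?thesis using fle[of j] by (simp add: J_def)
      qed
      then show ?thesis using A(1,2) by (simp add: Max_le_iff)
    qed
  qed
qed


end
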